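(* Let $p\in(1,\infty)$ be such that $\gamma_{p,w}:=\gamma\, n^{1/p}(w_{\max}/w_{\min})^{1/p}<1$, let $Q^*_\lambda$ be the unique fixed point of $F_\lambda$, and let $\theta^*_p:=\arg\min_{\theta\in\mathbb{R}^d} f_p(\theta)$, where $f_p(\theta)=\frac1p\|F_\lambda(\Phi\theta)-\Phi\theta\|_{p,w}^p$. Then \[ \|Q_{\theta^*_p}-Q^*_\lambda\|_{p,w}\le\frac{1+\gamma_{p,w}}{1-\gamma_{p,w}}\min_{\theta\in\mathbb{R}^d}\|Q_\theta-Q^*_\lambda\|_{p,w}. \]
   Context: Finite discounted MDP with state space $\mathcal S$, action space $\mathcal A$, transition probabilities $P(s'\mid s,a)$, expected reward $R(s,a)$, discount $\gamma\in[0,1)$; $n=|\mathcal S||\mathcal A|$ and Q-functions are vectors in $\mathbb{R}^n$ indexed by $(s,a)$. For $\lambda>0$, $(F_\lambda Q)(s,a) := R(s,a)+\gamma\sum_{s'}P(s'\mid s,a)\,\lambda\ln\big(\sum_{u\in\mathcal A}\exp(Q(s',u)/\lambda)\big)$. Weights $w_i>0$ with $\sum_i w_i=1$, $\|x\|_{p,w}=(\sum_i w_i|x_i|^p)^{1/p}$, $w_{\min}=\min_i w_i$, $w_{\max}=\max_i w_i$. $\Phi\in\mathbb{R}^{n\times d}$ is a full-rank feature matrix and $Q_\theta=\Phi\theta$. When $\gamma_{p,w}<1$, $F_\lambda$ is a contraction in $\|\cdot\|_{p,w}$ with unique fixed point $Q^*_\lambda$. *)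

theory Defs
  imports "HOL-Analysis.Analysis"
begin

definition soft_bellman ::
  "('s::finite \<Rightarrow> 'a::finite \<Rightarrow> 's \<Rightarrow> real) \<Rightarrow> ('s \<Rightarrow> 'a \<Rightarrow> real) \<Rightarrow> real \<Rightarrow> real
    \<Rightarrow> ('s \<times> 'a \<Rightarrow> real) \<Rightarrow> ('s \<times> 'a \<Rightarrow> real)" where
  "soft_bellman P R \<gamma> lam Q = (\<lambda>(s,a). R s a + \<gamma> * (\<Sum>s'\<in>UNIV. P s a s' *
      (lam * ln (\<Sum>u\<in>UNIV. exp (Q (s',u) / lam)))))"

definition wnorm :: "real \<Rightarrow> ('i::finite \<Rightarrow> real) \<Rightarrow> ('i \<Rightarrow> real) \<Rightarrow> real" where
  "wnorm p w x = (\<Sum>i\<in>UNIV. w i * \<bar>x i\<bar> powr p) powr (1 / p)"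

definition linQ :: "('i::finite \<Rightarrow> 'd::finite \<Rightarrow> real) \<Rightarrow> ('d \<Rightarrow> real) \<Rightarrow> ('i \<Rightarrow> real)" where
  "linQ \<Phi> \<theta> = (\<lambda>i. \<Sum>j\<in>UNIV. \<Phi> i j * \<theta> j)"

definition gamma_pw :: "real \<Rightarrow> real \<Rightarrow> ('i::finite \<Rightarrow> real) \<Rightarrow> real" where
  "gamma_pw \<gamma> p w = \<gamma> * real CARD('i) powr (1/p) * (Max (range w) / Min (range w)) powr (1/p)"

definition f_obj where
  "f_obj P R \<gamma> lam p w \<Phi> \<theta> =
     (1/p) * wnorm p w (\<lambda>i. soft_bellman P R \<gamma> lam (linQ \<Phi> \<theta>) i - linQ \<Phi> \<theta> i) powr p"

end

theory Submission imports Defs begin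

lemma conv_pow:
  fixes u v t p :: real
  assumes "0 \<le> u" "0 \<le> v" "0 \<le> t" "t \<le> 1" "1 \<le> p"
  shows "((1 - t) * u + t * v) powr p \<le> (1 - t) * u powr p + t * v powr p"
proof -
  have tp: "s powr p \<le> s" if "0 \<le> s" "s \<le> 1" for s :: real
    using powr_mono'[of 1 p s] that assms by simp
  show ?thesis
  proof (cases "u = 0")
    case True
    then show ?thesis using tp[of t] assms
      by (simp add: powr_mult mult_right_mono)
  next
    case u: False
    show ?thesis
    proof (cases "v = 0")
      case True
      then show ?thesis using tp[of "1-t"] assms
        by (simp add: powr_mult mult_right_mono)
    next
      case False
      then show ?thesis using convex_onD[OF powr_convex[OF assms(5)], of t u v] u assms by simp
    qed
  qed
qed

definition S where "S p w x = (\<Sum>i\<in>UNIV. w i * \<bar>x i\<bar> powr p)"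

lemma S_nonneg: "(\<And>i. w i > 0) \<Longrightarrow> 0 \<le> S p w (x::'i::finite \<Rightarrow> real)"
  unfolding S_def by (intro sum_nonneg) (simp add: less_imp_le)

lemma wnorm_S: "wnorm p w x = S p w x powr (1/p)"
  by (simp add: wnorm_def S_def)

lemma wnorm_nonneg: "0 \<le> wnorm p w x"
  by (simp add: wnorm_def)

lemma wnorm_pow:
  assumes "\<And>i. w i > 0" "p > 0"
  shows "wnorm p w (x::'i::finite \<Rightarrow> real) powr p = S p w x"
  using S_nonneg[of w p x, OF assms(1)] assms(2)
  by (simp add: wnorm_S powr_powr)

lemma wnorm_zero:
  assumes "\<And>i. w i > 0" "p > 0" "wnorm p w (x::'i::finite \<Rightarrow> real) = 0"
  shows "x i = 0"
proof -
  have "wnorm p w x powr p = S p w x" by (rule wnorm_pow) (use assms in auto)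
  hence "S p w x = 0" using assms(2,3) by simp
  hence "\<forall>j\<in>UNIV. w j * \<bar>x j\<bar> powr p = 0"
    unfolding S_def by (subst sum_nonneg_eq_0_iff[symmetric]) (auto intro!: mult_nonneg_nonneg less_imp_le[OF assms(1)])
  then have "\<forall>j. w j = 0 \<or> x j = 0" using assms(2) by auto
  then show ?thesis using assms(1)[of i] by (metis order_less_irrefl)
qed

lemma wnorm_comp:
  assumes "\<And>i. w i > 0" "p > 0"
  shows "\<bar>x i\<bar> \<le> wnorm p w (x::'i::finite \<Rightarrow> real) / w i powr (1/p)"
proof -
  have "w i * \<bar>x i\<bar> powr p \<le> S p w x"
    unfolding S_def by (rule member_le_sum) (auto intro!: mult_nonneg_nonneg less_imp_le[OF assms(1)])
  hence "\<bar>x i\<bar> powr p \<le> S p w x / w i" using assms(1)[of i] by (simp add: field_simps)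
  hence "(\<bar>x i\<bar> powr p) powr (1/p) \<le> (S p w x / w i) powr (1/p)"
    by (intro powr_mono2) (use assms in auto)
  thus ?thesis using assms(2) by (simp add: powr_powr powr_divide wnorm_S)
qed

lemma wnorm_bound:
  assumes "\<And>i. w i > 0" "p > 0" "(\<Sum>i\<in>UNIV. w i) = 1" "\<And>i. \<bar>x i\<bar> \<le> c"
  shows "wnorm p w (x::'i::finite \<Rightarrow> real) \<le> c"
proof -
  have c: "0 \<le> c" using assms(4)[of undefined] by linarith
  have "S p w x \<le> (\<Sum>i\<in>UNIV. w i * c powr p)"
    unfolding S_def
    by (intro sum_mono mult_left_mono powr_mono2) (use assms in \<open>auto intro: less_imp_le\<close>)
  also have "\<dots> = c powr p" using assms(3) by (simp add: sum_distrib_right[symmetric])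
  finally have "S p w x powr (1/p) \<le> (c powr p) powr (1/p)"
    by (intro powr_mono2) (use assms S_nonneg[OF assms(1)] in auto)
  thus ?thesis using assms(2) c by (simp add: powr_powr wnorm_S)
qed

lemma wnorm_triangle:
  assumes w: "\<And>i. w i > 0" and p: "p \<ge> 1"
  shows "wnorm p w (\<lambda>i. x i + y i) \<le> wnorm p w (x::'i::finite \<Rightarrow> real) + wnorm p w y"
proof -
  define a where "a = wnorm p w x"
  define b where "b = wnorm p w y"
  have p0: "p > 0" using p by simp
  show ?thesis
  proof (cases "a = 0 \<or> b = 0")
    case True
    then show ?thesis
    proof
      assume "a = 0"
      hence "x = (\<lambda>_. 0)" using wnorm_zero[where w=w and p=p and x=x] w p0 a_def by auto
      thus ?thesis by (simp add: wnorm_nonneg)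
    next
      assume "b = 0"
      hence "y = (\<lambda>_. 0)" using wnorm_zero[where w=w and p=p and x=y] w p0 b_def by auto
      thus ?thesis by (simp add: wnorm_nonneg)
    qed
  next
    case False
    hence a: "a > 0" and b: "b > 0" using wnorm_nonneg a_def b_def by (metis less_eq_real_def)+
    define t where "t = b / (a + b)"
    have t0: "0 \<le> t" "t \<le> 1" using a b by (auto simp: t_def)
    have t1: "1 - t = a / (a + b)" using a b by (simp add: t_def field_simps)
    have Sa: "S p w x = a powr p" using wnorm_pow[of w p x] w p0 a_def by simp
    have Sb: "S p w y = b powr p" using wnorm_pow[of w p y] w p0 b_def by simp
    have pt: "\<bar>x i + y i\<bar> powr p \<le> (a + b) powr p * ((1 - t) * (\<bar>x i\<bar> / a) powr p + t * (\<bar>y i\<bar> / b) powr p)" for i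
    proof -
      have "\<bar>x i + y i\<bar> \<le> (a + b) * ((1 - t) * (\<bar>x i\<bar> / a) + t * (\<bar>y i\<bar> / b))"
      proof -
        have "(a + b) * ((1 - t) * (\<bar>x i\<bar> / a) + t * (\<bar>y i\<bar> / b)) = \<bar>x i\<bar> + \<bar>y i\<bar>"
        proof -
          have ab: "a + b \<noteq> 0" using a b by simp
          have e: "1 - b / (a + b) = a / (a + b)" using ab by (simp add: field_simps)
          show ?thesis unfolding t_def e using a b ab by (simp add: distrib_left)
        qed
        thus ?thesis by (simp add: abs_triangle_ineq)
      qed
      hence "\<bar>x i + y i\<bar> powr p \<le> ((a + b) * ((1 - t) * (\<bar>x i\<bar> / a) + t * (\<bar>y i\<bar> / b))) powr p"
        by (intro powr_mono2) (use p in auto)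
      also have "\<dots> = (a + b) powr p * ((1 - t) * (\<bar>x i\<bar> / a) + t * (\<bar>y i\<bar> / b)) powr p"
        by (simp add: powr_mult)
      also have "\<dots> \<le> (a + b) powr p * ((1 - t) * (\<bar>x i\<bar> / a) powr p + t * (\<bar>y i\<bar> / b) powr p)"
        by (intro mult_left_mono conv_pow) (use a b t0 p in auto)
      finally show ?thesis .
    qed
    have "S p w (\<lambda>i. x i + y i) \<le> (\<Sum>i\<in>UNIV. w i * ((a + b) powr p * ((1 - t) * (\<bar>x i\<bar> / a) powr p + t * (\<bar>y i\<bar> / b) powr p)))"
      unfolding S_def by (intro sum_mono mult_left_mono pt) (use w in \<open>auto intro: less_imp_le\<close>)
    also have "\<dots> = (a + b) powr p * ((1 - t) * (S p w x / a powr p) + t * (S p w y / b powr p))"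
      by (simp add: S_def powr_divide sum_distrib_left sum_distrib_right sum_divide_distrib algebra_simps sum.distrib)
    also have "\<dots> = (a + b) powr p" using a b by (simp add: Sa Sb)
    finally have "S p w (\<lambda>i. x i + y i) powr (1/p) \<le> ((a + b) powr p) powr (1/p)"
      by (intro powr_mono2) (use p S_nonneg[OF w] in auto)
    thus ?thesis using p a b by (simp add: powr_powr wnorm_S a_def b_def)
  qed
qed

lemma wnorm_tri2:
  assumes w: "\<And>i. w i > 0" and p: "p \<ge> 1"
  shows "wnorm p w (\<lambda>i. A i - C i) \<le> wnorm p w (\<lambda>i. A i - B i) + wnorm p w (\<lambda>i. (B::'i::finite\<Rightarrow>real) i - C i)"
  using wnorm_triangle[where w=w and p=p and x="\<lambda>i. A i - B i" and y="\<lambda>i. B i - C i"] w p by simp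

lemma wnorm_sym: "wnorm p w (\<lambda>i. A i - B i) = wnorm p w (\<lambda>i. B i - A i)"
  by (simp add: wnorm_def abs_minus_commute)

lemma lse_shift:
  fixes f g :: "'a::finite \<Rightarrow> real"
  assumes lam: "lam > 0" and fg: "\<And>u. f u \<le> g u + c"
  shows "lam * ln (\<Sum>u\<in>UNIV. exp (f u / lam)) \<le> c + lam * ln (\<Sum>u\<in>UNIV. exp (g u / lam))"
proof -
  have pos: "0 < (\<Sum>u\<in>UNIV. exp (h u / lam))" for h :: "'a \<Rightarrow> real"
    by (intro sum_pos) auto
  have "(\<Sum>u\<in>UNIV. exp (f u / lam)) \<le> (\<Sum>u\<in>UNIV. exp (c / lam) * exp (g u / lam))"
  proof (intro sum_mono)
    fix u
    have "f u / lam \<le> c / lam + g u / lam" using fg[of u] lam by (simp add: divide_right_mono add_divide_distrib[symmetric])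
    thus "exp (f u / lam) \<le> exp (c / lam) * exp (g u / lam)" by (simp add: exp_add[symmetric])
  qed
  also have "\<dots> = exp (c / lam) * (\<Sum>u\<in>UNIV. exp (g u / lam))" by (simp add: sum_distrib_left)
  finally have "ln (\<Sum>u\<in>UNIV. exp (f u / lam)) \<le> ln (exp (c / lam) * (\<Sum>u\<in>UNIV. exp (g u / lam)))"
    using pos by (subst ln_le_cancel_iff) auto
  also have "\<dots> = c / lam + ln (\<Sum>u\<in>UNIV. exp (g u / lam))" using pos[of g] by (simp add: ln_mult)
  finally show ?thesis using lam by (simp add: field_simps mult_left_mono)
qed

lemma sb_lip:
  fixes P :: "'s::finite \<Rightarrow> 'a::finite \<Rightarrow> 's \<Rightarrow> real" and Q1 Q2 :: "'s \<times> 'a \<Rightarrow> real"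
  assumes P_nonneg: "\<And>s a s'. P s a s' \<ge> 0"
    and P_sum: "\<And>s a. (\<Sum>s'\<in>UNIV. P s a s') = 1"
    and g: "0 \<le> \<gamma>" and lam: "lam > 0"
    and c: "\<And>i. \<bar>Q1 i - Q2 i\<bar> \<le> c"
  shows "\<bar>soft_bellman P R \<gamma> lam Q1 i - soft_bellman P R \<gamma> lam Q2 i\<bar> \<le> \<gamma> * c"
proof -
  obtain s a where i: "i = (s, a)" by (cases i)
  define L where "L (Q :: 's \<times> 'a \<Rightarrow> real) s' = lam * ln (\<Sum>u\<in>UNIV. exp (Q (s', u) / lam))" for Q s'
  have Ld: "\<bar>L Q1 s' - L Q2 s'\<bar> \<le> c" for s'
  proof -
    have "L Q1 s' \<le> c + L Q2 s'" unfolding L_def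
      by (rule lse_shift[OF lam]) (use c in \<open>smt (verit)\<close>)
    moreover have "L Q2 s' \<le> c + L Q1 s'" unfolding L_def
      by (rule lse_shift[OF lam]) (use c in \<open>smt (verit)\<close>)
    ultimately show ?thesis by linarith
  qed
  have "soft_bellman P R \<gamma> lam Q1 i - soft_bellman P R \<gamma> lam Q2 i = \<gamma> * (\<Sum>s'\<in>UNIV. P s a s' * (L Q1 s' - L Q2 s'))"
    by (simp add: soft_bellman_def i L_def right_diff_distrib sum_subtractf)
  also have "\<bar>\<dots>\<bar> \<le> \<gamma> * (\<Sum>s'\<in>UNIV. P s a s' * c)"
  proof -
    have "\<bar>\<Sum>s'\<in>UNIV. P s a s' * (L Q1 s' - L Q2 s')\<bar> \<le> (\<Sum>s'\<in>UNIV. \<bar>P s a s' * (L Q1 s' - L Q2 s')\<bar>)"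
      by (rule sum_abs)
    also have "\<dots> \<le> (\<Sum>s'\<in>UNIV. P s a s' * c)"
      by (intro sum_mono) (auto simp: abs_mult P_nonneg intro!: mult_left_mono Ld)
    finally show ?thesis using g by (simp add: abs_mult mult_left_mono)
  qed
  also have "\<dots> = \<gamma> * c" by (simp add: sum_distrib_right[symmetric] P_sum)
  finally show ?thesis .
qed

lemma sb_contr:
  fixes P :: "'s::finite \<Rightarrow> 'a::finite \<Rightarrow> 's \<Rightarrow> real" and X Y :: "'s \<times> 'a \<Rightarrow> real"
    and w :: "'s \<times> 'a \<Rightarrow> real"
  assumes P_nonneg: "\<And>s a s'. P s a s' \<ge> 0"
    and P_sum: "\<And>s a. (\<Sum>s'\<in>UNIV. P s a s') = 1"
    and g: "0 \<le> \<gamma>" and lam: "lam > 0"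
    and w_pos: "\<And>i. w i > 0"
    and w_sum: "(\<Sum>i\<in>UNIV. w i) = 1"
    and p: "1 < p"
  shows "wnorm p w (\<lambda>i. soft_bellman P R \<gamma> lam X i - soft_bellman P R \<gamma> lam Y i)
     \<le> gamma_pw \<gamma> p w * wnorm p w (\<lambda>i. X i - Y i)"
proof -
  define wm where "wm = Min (range w)"
  define wM where "wM = Max (range w)"
  define N where "N = wnorm p w (\<lambda>i. X i - Y i)"
  have N0: "0 \<le> N" by (simp add: N_def wnorm_nonneg)
  have "wm \<in> range w" unfolding wm_def by (rule Min_in) auto
  hence wm0: "wm > 0" using w_pos by auto
  have wmle: "wm \<le> w i" for i unfolding wm_def by (rule Min_le) auto
  have wMge: "w i \<le> wM" for i unfolding wM_def by (rule Max_ge) auto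
  define c where "c = N / wm powr (1/p)"
  have p0: "p > 0" using p by simp
  have cb: "\<bar>X i - Y i\<bar> \<le> c" for i
  proof -
    have "\<bar>X i - Y i\<bar> \<le> N / w i powr (1/p)" unfolding N_def
      using wnorm_comp[where w=w and p=p and x="\<lambda>i. X i - Y i" and i=i] w_pos p0 by simp
    also have "\<dots> \<le> c" unfolding c_def
      by (intro divide_left_mono N0 powr_mono2 wmle mult_pos_pos) (use wm0 w_pos[of i] p0 in auto)
    finally show ?thesis .
  qed
  have "wnorm p w (\<lambda>i. soft_bellman P R \<gamma> lam X i - soft_bellman P R \<gamma> lam Y i) \<le> \<gamma> * c"
    by (rule wnorm_bound) (use w_pos p0 w_sum sb_lip[OF P_nonneg P_sum g lam cb] in auto)
  also have "\<gamma> * c \<le> gamma_pw \<gamma> p w * N"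
  proof -
    have "1 = (\<Sum>i\<in>UNIV. w i)" using w_sum by simp
    also have "\<dots> \<le> (\<Sum>i\<in>(UNIV::('s\<times>'a) set). wM)" by (intro sum_mono wMge)
    also have "\<dots> = real CARD('s \<times> 'a) * wM" by simp
    finally have "1 \<le> (real CARD('s \<times> 'a) * wM) powr (1/p)"
      using ge_one_powr_ge_zero p0 by simp
    hence "1 \<le> real CARD('s \<times> 'a) powr (1/p) * wM powr (1/p)" by (simp add: powr_mult)
    note K = this
    have c0: "0 \<le> c" using N0 wm0 by (simp add: c_def)
    have "\<gamma> * c \<le> \<gamma> * (real CARD('s \<times> 'a) powr (1/p) * wM powr (1/p)) * c"
      using mult_right_mono[OF mult_left_mono[OF K g] c0] by simp
    also have "\<dots> = gamma_pw \<gamma> p w * N"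
      unfolding gamma_pw_def c_def wm_def[symmetric] wM_def[symmetric] by (simp add: powr_divide)
    finally show ?thesis .
  qed
  finally show ?thesis unfolding N_def .
qed

theorem theorem1:
  fixes P :: "'s::finite \<Rightarrow> 'a::finite \<Rightarrow> 's \<Rightarrow> real"
    and R :: "'s \<Rightarrow> 'a \<Rightarrow> real"
    and w :: "'s \<times> 'a \<Rightarrow> real"
    and \<Phi> :: "'s \<times> 'a \<Rightarrow> 'd::finite \<Rightarrow> real"
    and \<gamma> lam p :: real
    and Qstar :: "'s \<times> 'a \<Rightarrow> real"
    and \<theta>star :: "'d \<Rightarrow> real"
  assumes P_nonneg: "\<And>s a s'. P s a s' \<ge> 0"
    and P_sum: "\<And>s a. (\<Sum>s'\<in>UNIV. P s a s') = 1"
    and gamma: "0 \<le> \<gamma>" "\<gamma> < 1"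
    and lam: "lam > 0"
    and w_pos: "\<And>i. w i > 0"
    and w_sum: "(\<Sum>i\<in>UNIV. w i) = 1"
    and full_rank: "\<And>\<theta>. linQ \<Phi> \<theta> = (\<lambda>_. 0) \<Longrightarrow> \<theta> = (\<lambda>_. 0)"
    and p: "1 < p"
    and contr: "gamma_pw \<gamma> p w < 1"
    and fixpt: "soft_bellman P R \<gamma> lam Qstar = Qstar"
    and argmin: "\<And>\<theta>. f_obj P R \<gamma> lam p w \<Phi> \<theta>star \<le> f_obj P R \<gamma> lam p w \<Phi> \<theta>"
  shows "wnorm p w (\<lambda>i. linQ \<Phi> \<theta>star i - Qstar i)
           \<le> (1 + gamma_pw \<gamma> p w) / (1 - gamma_pw \<gamma> p w)
              * (INF \<theta>. wnorm p w (\<lambda>i. linQ \<Phi> \<theta> i - Qstar i))"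
proof -
  define g where "g = gamma_pw \<gamma> p w"
  define F where "F = soft_bellman P R \<gamma> lam"
  define e where "e = wnorm p w (\<lambda>i. linQ \<Phi> \<theta>star i - Qstar i)"
  define r where "r \<theta> = wnorm p w (\<lambda>i. F (linQ \<Phi> \<theta>) i - linQ \<Phi> \<theta> i)" for \<theta>
  define d where "d \<theta> = wnorm p w (\<lambda>i. linQ \<Phi> \<theta> i - Qstar i)" for \<theta>
  have p1: "1 \<le> p" using p by simp
  have g0: "0 \<le> g" unfolding g_def gamma_pw_def using gamma by simp
  have g1: "g < 1" using contr g_def by simp
  have con: "wnorm p w (\<lambda>i. F X i - F Y i) \<le> g * wnorm p w (\<lambda>i. X i - Y i)" for X Y
    unfolding F_def g_def by (rule sb_contr[OF P_nonneg P_sum gamma(1) lam w_pos w_sum p])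
  have tri: "wnorm p w (\<lambda>i. A i - C i) \<le> wnorm p w (\<lambda>i. A i - B i) + wnorm p w (\<lambda>i. B i - C i)"
    for A B C :: "'s \<times> 'a \<Rightarrow> real"
    by (rule wnorm_tri2) (use w_pos p1 in auto)
  have FQ: "F Qstar = Qstar" using fixpt F_def by simp
  have "e \<le> wnorm p w (\<lambda>i. linQ \<Phi> \<theta>star i - F (linQ \<Phi> \<theta>star) i) + wnorm p w (\<lambda>i. F (linQ \<Phi> \<theta>star) i - F Qstar i)"
    unfolding e_def using tri[of "linQ \<Phi> \<theta>star" Qstar "F (linQ \<Phi> \<theta>star)"] FQ by simp
  also have "\<dots> \<le> r \<theta>star + g * e"
    using con[of "linQ \<Phi> \<theta>star" Qstar] FQ unfolding r_def e_def
    by (simp add: wnorm_sym[of p w "linQ \<Phi> \<theta>star"])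
  finally have e1: "(1 - g) * e \<le> r \<theta>star" by (simp add: algebra_simps)
  have rmin: "r \<theta>star \<le> r \<theta>" for \<theta>
  proof (rule ccontr)
    assume "\<not> r \<theta>star \<le> r \<theta>"
    hence "r \<theta> powr p < r \<theta>star powr p"
      by (intro powr_less_mono2) (use p in \<open>auto simp: r_def wnorm_nonneg\<close>)
    hence "f_obj P R \<gamma> lam p w \<Phi> \<theta> < f_obj P R \<gamma> lam p w \<Phi> \<theta>star"
      using p by (simp add: f_obj_def r_def F_def divide_strict_right_mono)
    thus False using argmin[of \<theta>] by simp
  qed
  have rd: "r \<theta> \<le> (1 + g) * d \<theta>" for \<theta>
  proof -
    have "r \<theta> \<le> wnorm p w (\<lambda>i. F (linQ \<Phi> \<theta>) i - F Qstar i) + wnorm p w (\<lambda>i. Qstar i - linQ \<Phi> \<theta> i)"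
      unfolding r_def using tri[of "F (linQ \<Phi> \<theta>)" "linQ \<Phi> \<theta>" Qstar] FQ by simp
    also have "\<dots> \<le> g * d \<theta> + d \<theta>"
      using con[of "linQ \<Phi> \<theta>" Qstar] unfolding d_def
      by (simp add: wnorm_sym[of p w Qstar])
    finally show ?thesis by (simp add: algebra_simps)
  qed
  have key: "e * ((1 - g) / (1 + g)) \<le> d \<theta>" for \<theta>
  proof -
    have "(1 - g) * e \<le> (1 + g) * d \<theta>" using e1 rmin[of \<theta>] rd[of \<theta>] by linarith
    thus ?thesis using g0 by (simp add: field_simps)
  qed
  have "e * ((1 - g) / (1 + g)) \<le> (INF \<theta>. d \<theta>)"
    by (rule cINF_greatest) (use key in auto)
  hence "e \<le> (1 + g) / (1 - g) * (INF \<theta>. d \<theta>)"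
    using g0 g1 by (simp add: field_simps)
  thus ?thesis unfolding e_def d_def g_def .
qed

end
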